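(* Let $k$ be a field of characteristic $0$ and let $F(X,Y), G(X,Y)\in k[X,Y]$. Assume there exist $A(X,Y), B(X,Y)\in k[X,Y]$ such that $$A(F(X,Y),G(X,Y))=X,\quad B(F(X,Y),G(X,Y))=Y,\quad F(A(X,Y),B(X,Y))=X,\quad G(A(X,Y),B(X,Y))=Y.$$ Then there exist $\mathcal{X}(t), \mathcal{Y}(t)\in k[X,Y][t]$ such that $$F(\mathcal{X}(t),\mathcal{Y}(t))=tX+(1-t)F(X,Y),\qquad G(\mathcal{X}(t),\mathcal{Y}(t))=tY+(1-t)G(X,Y),$$ with $\mathcal{X}(0)=X$, $\mathcal{Y}(0)=Y$, $\mathcal{X}(1)=A(X,Y)$ and $\mathcal{Y}(1)=B(X,Y)$. Moreover, the degree in $t$ of $\mathcal{X}(t)$ and of $\mathcal{Y}(t)$ is at most $\max\{\deg F(X,Y), \deg G(X,Y)\}$.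
   Context: For a polynomial $F\in k[X,Y]$, $\deg(F)$ denotes the total degree (maximum total degree of the monomials occurring in $F$). *)

theory Defs
  imports "HOL-Computational_Algebra.Polynomial"
begin

text \<open>Bivariate polynomials k[X,Y] are represented as 'k poly poly:
  the outer variable is Y, the inner variable (in the coefficients) is X.\<close>

definition varX :: "'k::comm_ring_1 poly poly" where
  "varX = [:[:0, 1:]:]"

definition varY :: "'k::comm_ring_1 poly poly" where
  "varY = [:0, 1:]"

definition eval2 :: "('k::comm_ring_1 \<Rightarrow> 'r::comm_ring_1) \<Rightarrow> 'k poly poly \<Rightarrow> 'r \<Rightarrow> 'r \<Rightarrow> 'r" where
  "eval2 emb F x y = poly (map_poly (\<lambda>p. poly (map_poly emb p) x) F) y"

definition total_degree :: "'k::comm_ring_1 poly poly \<Rightarrow> nat" where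
  "total_degree F = Max (insert 0 {i + j | i j. coeff (coeff F j) i \<noteq> 0})"

end

theory Submission
  imports Defs "HOL-Algebra.Algebraic_Closure_Type"
begin


hide_const (open) Polynomials.degree Polynomials.lead_coeff up_ring.coeff

definition rhom :: "('a::comm_ring_1 \<Rightarrow> 'b::comm_ring_1) \<Rightarrow> bool" where
  "rhom h \<longleftrightarrow> (\<forall>a b. h (a + b) = h a + h b) \<and> (\<forall>a b. h (a * b) = h a * h b) \<and> h 1 = 1"

lemma rhom_add: "rhom h \<Longrightarrow> h (a + b) = h a + h b" by (simp add: rhom_def)
lemma rhom_mult: "rhom h \<Longrightarrow> h (a * b) = h a * h b" by (simp add: rhom_def)
lemma rhom_1: "rhom h \<Longrightarrow> h 1 = 1" by (simp add: rhom_def)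
lemma rhom_0: "rhom h \<Longrightarrow> h 0 = 0"
proof -
  assume h: "rhom h"
  have "h (0 + 0) = h 0 + h 0" using rhom_add[OF h] .
  thus ?thesis by simp
qed
lemma rhom_uminus: "rhom h \<Longrightarrow> h (- a) = - h a"
proof -
  assume h: "rhom h"
  have "h (a + - a) = h a + h (- a)" using rhom_add[OF h] .
  thus ?thesis using rhom_0[OF h] by (simp add: eq_neg_iff_add_eq_0 add.commute)
qed
lemma rhom_diff: "rhom h \<Longrightarrow> h (a - b) = h a - h b"
  using rhom_add[of h a "- b"] rhom_uminus[of h b] by simp
lemma rhom_power: "rhom h \<Longrightarrow> h (a ^ n) = h a ^ n"
  by (induction n) (simp_all add: rhom_1 rhom_mult)

lemma rhom_comp: "rhom h \<Longrightarrow> rhom g \<Longrightarrow> rhom (h \<circ> g)"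
  by (simp add: rhom_def)

lemma rhom_const: "rhom (\<lambda>c. [:c:])"
  by (simp add: rhom_def one_pCons)

lemma rhom_to_ac: "rhom to_ac"
  by (simp add: rhom_def)

lemma hpoly_pCons:
  assumes "rhom h"
  shows "poly (map_poly h (pCons a p)) u = h a + u * poly (map_poly h p) u"
  using assms by (simp add: map_poly_pCons rhom_0)

lemma hpoly_add:
  assumes h: "rhom h"
  shows "poly (map_poly h (p + q)) u = poly (map_poly h p) u + poly (map_poly h q) u"
proof (induction p q rule: poly_induct2)
  case 0 then show ?case by simp
next
  case (pCons a p b q)
  then show ?case using h
    by (simp add: hpoly_pCons rhom_add algebra_simps)
qed

lemma hpoly_smult:
  assumes h: "rhom h"
  shows "poly (map_poly h (Polynomial.smult a q)) u = h a * poly (map_poly h q) u"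
proof (induction q)
  case 0 then show ?case using h by (simp add: rhom_0)
next
  case (pCons b q)
  then show ?case using h
    by (simp add: hpoly_pCons rhom_mult algebra_simps)
qed

lemma hpoly_mult:
  assumes h: "rhom h"
  shows "poly (map_poly h (p * q)) u = poly (map_poly h p) u * poly (map_poly h q) u"
proof (induction p)
  case 0 then show ?case by simp
next
  case (pCons a p)
  have "pCons a p * q = Polynomial.smult a q + pCons 0 (p * q)" by simp
  then show ?case using h pCons
    by (simp add: hpoly_add hpoly_smult hpoly_pCons rhom_0 algebra_simps)
qed

lemma rhom_hpoly: "rhom h \<Longrightarrow> rhom (\<lambda>p. poly (map_poly h p) u)"
  unfolding rhom_def[of "\<lambda>p. poly (map_poly h p) u"]
  by (simp add: hpoly_add hpoly_mult rhom_1)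

lemma rhom_eval2: "rhom e \<Longrightarrow> rhom (\<lambda>P. eval2 e P u v)"
  unfolding eval2_def by (rule rhom_hpoly, rule rhom_hpoly)

lemma hom_hpoly_comm:
  assumes h: "rhom h" and g: "rhom g"
  shows "h (poly (map_poly g p) u) = poly (map_poly (h \<circ> g) p) (h u)"
proof (induction p)
  case 0 then show ?case using h by (simp add: rhom_0)
next
  case (pCons a p)
  have hg: "rhom (\<lambda>x. h (g x))" using rhom_comp[OF h g] by (simp add: comp_def)
  show ?case using pCons h g hpoly_pCons[OF hg, of a p "h u"] hpoly_pCons[OF g, of a p u]
    by (simp add: rhom_add rhom_mult comp_def)
qed

lemma hom_eval2_comm:
  assumes h: "rhom h" and e: "rhom e"
  shows "h (eval2 e P u v) = eval2 (h \<circ> e) P (h u) (h v)"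
proof -
  have g: "rhom (\<lambda>p. poly (map_poly e p) u)" by (rule rhom_hpoly[OF e])
  have "h (eval2 e P u v) = poly (map_poly (h \<circ> (\<lambda>p. poly (map_poly e p) u)) P) (h v)"
    unfolding eval2_def by (rule hom_hpoly_comm[OF h g])
  also have "h \<circ> (\<lambda>p. poly (map_poly e p) u) = (\<lambda>p. poly (map_poly (h \<circ> e) p) (h u))"
    by (rule ext) (simp add: hom_hpoly_comm[OF h e])
  finally show ?thesis unfolding eval2_def .
qed

lemma eval2_const: "rhom e \<Longrightarrow> eval2 e [:[:c:]:] u v = e c"
  by (frule rhom_0) (simp add: eval2_def map_poly_pCons)

lemma eval2_varX: "rhom e \<Longrightarrow> eval2 e varX u v = u"
  by (frule rhom_0, frule rhom_1) (simp add: eval2_def varX_def map_poly_pCons)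

lemma eval2_varY: "rhom e \<Longrightarrow> eval2 e varY u v = v"
  by (frule rhom_0, frule rhom_1) (simp add: eval2_def varY_def map_poly_pCons)



lemma rhom_cc2: "rhom (\<lambda>c. [:[:c:]:])"
  using rhom_comp[OF rhom_const rhom_const] by (simp add: comp_def)

lemma rhom_cc3: "rhom (\<lambda>c. [:[:[:c:]:]:])"
  using rhom_comp[OF rhom_const rhom_cc2] by (simp add: comp_def)

lemma rhom_polyat: "rhom (\<lambda>p. poly p x)"
  by (simp add: rhom_def)

lemma eval2_XY: "eval2 (\<lambda>c. [:[:c:]:]) P varX varY = P"
proof -
  have inner: "poly (map_poly (\<lambda>c. [:[:c:]:]) p) varX = [:p:]" for p :: "'a poly"
  proof -
    have "poly (map_poly (\<lambda>c. [:[:c:]:]) p) varX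
        = poly (map_poly ((\<lambda>x. [:x:]) \<circ> (\<lambda>c. [:c:])) p) [:[:0,1:]:]"
      by (simp add: varX_def comp_def)
    also have "\<dots> = [: poly (map_poly (\<lambda>c. [:c:]) p) [:0,1:] :]"
      by (rule hom_hpoly_comm[OF rhom_const rhom_const, symmetric])
    also have "poly (map_poly (\<lambda>c. [:c:]) p) [:0,1:] = p"
      using pcompose_altdef[of p "[:0,1:]"] pcompose_idR[of p] by simp
    finally show ?thesis .
  qed
  have "eval2 (\<lambda>c. [:[:c:]:]) P varX varY = poly (map_poly (\<lambda>p. [:p:]) P) [:0,1:]"
    unfolding eval2_def by (simp add: inner varY_def)
  also have "\<dots> = P"
    using pcompose_altdef[of P "[:0,1:]"] pcompose_idR[of P] by simp
  finally show ?thesis .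
qed

lemma construction:
  fixes F G A B :: "'k::field_char_0 poly poly"
  assumes "eval2 (\<lambda>c. [:[:c:]:]) A F G = varX"
      and "eval2 (\<lambda>c. [:[:c:]:]) B F G = varY"
      and "eval2 (\<lambda>c. [:[:c:]:]) F A B = varX"
      and "eval2 (\<lambda>c. [:[:c:]:]) G A B = varY"
  defines "PX \<equiv> eval2 (\<lambda>c. [:[:[:c:]:]:]) A [:F, varX - F:] [:G, varY - G:]"
      and "PY \<equiv> eval2 (\<lambda>c. [:[:[:c:]:]:]) B [:F, varX - F:] [:G, varY - G:]"
  shows "eval2 (\<lambda>c. [:[:[:c:]:]:]) F PX PY = [:0, 1:] * [:varX:] + (1 - [:0, 1:]) * [:F:]
         \<and> eval2 (\<lambda>c. [:[:[:c:]:]:]) G PX PY = [:0, 1:] * [:varY:] + (1 - [:0, 1:]) * [:G:]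
         \<and> poly PX 0 = varX \<and> poly PY 0 = varY
         \<and> poly PX 1 = A \<and> poly PY 1 = B"
proof -
  define h1 where "h1 = (\<lambda>Q. eval2 (\<lambda>c. [:[:[:c:]:]:]) Q [:F, varX - F:] [:G, varY - G:])"
  have h1: "rhom h1" unfolding h1_def by (rule rhom_eval2[OF rhom_cc3])
  have h1c: "h1 \<circ> (\<lambda>c. [:[:c:]:]) = (\<lambda>c. [:[:[:c:]:]:])"
    by (rule ext) (simp add: h1_def eval2_const[OF rhom_cc3])
  have h1X: "h1 varX = [:F, varX - F:]" unfolding h1_def by (rule eval2_varX[OF rhom_cc3])
  have h1Y: "h1 varY = [:G, varY - G:]" unfolding h1_def by (rule eval2_varY[OF rhom_cc3])
  have XX: "PX = h1 A" "PY = h1 B" by (simp_all add: PX_def PY_def h1_def)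
  have c1: "eval2 (\<lambda>c. [:[:[:c:]:]:]) F PX PY = [:F, varX - F:]"
    using hom_eval2_comm[OF h1 rhom_cc2, of F A B] assms(3) h1c h1X XX by simp
  have c2: "eval2 (\<lambda>c. [:[:[:c:]:]:]) G PX PY = [:G, varY - G:]"
    using hom_eval2_comm[OF h1 rhom_cc2, of G A B] assms(4) h1c h1Y XX by simp
  have o1: "[:1:] = (1::'k poly)" "[:-1:] = -(1::'k poly)" by (simp, subst one_pCons, simp)
  have l1: "[:0, 1:] * [:varX:] + (1 - [:0, 1:]) * [:F:] = [:F, varX - F:]"
    by (simp add: poly_eq_iff coeff_pCons split: nat.split)
  have l2: "[:0, 1:] * [:varY:] + (1 - [:0, 1:]) * [:G:] = [:G, varY - G:]"
    by (simp add: poly_eq_iff coeff_pCons split: nat.split)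
  define h0 where "h0 = (\<lambda>Q::'k poly poly poly. poly Q 0)"
  define h1' where "h1' = (\<lambda>Q::'k poly poly poly. poly Q 1)"
  have h0: "rhom h0" "rhom h1'" unfolding h0_def h1'_def by (rule rhom_polyat)+
  have h0c: "h0 \<circ> (\<lambda>c. [:[:[:c:]:]:]) = (\<lambda>c. [:[:c:]:])" "h1' \<circ> (\<lambda>c. [:[:[:c:]:]:]) = (\<lambda>c. [:[:c:]:])"
    by (rule ext, simp add: h0_def h1'_def)+
  have p0: "poly PX 0 = varX" "poly PY 0 = varY"
    using hom_eval2_comm[OF h0(1) rhom_cc3, of A "[:F, varX - F:]" "[:G, varY - G:]"]
      hom_eval2_comm[OF h0(1) rhom_cc3, of B "[:F, varX - F:]" "[:G, varY - G:]"]
      h0c assms(1,2) unfolding PX_def PY_def by (simp_all add: h0_def)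
  have p1: "poly PX 1 = A" "poly PY 1 = B"
    using hom_eval2_comm[OF h0(2) rhom_cc3, of A "[:F, varX - F:]" "[:G, varY - G:]"]
      hom_eval2_comm[OF h0(2) rhom_cc3, of B "[:F, varX - F:]" "[:G, varY - G:]"]
      h0c eval2_XY unfolding PX_def PY_def by (simp_all add: h1'_def)
  show ?thesis using c1 c2 l1 l2 p0 p1 by simp
qed



lemma card_roots_rsf:
  fixes R :: "'a::alg_closed_field poly"
  assumes rsf: "rsquarefree R"
  shows "card {t. poly R t = 0} = degree R"
proof -
  have R0: "R \<noteq> 0" using rsf by (simp add: rsquarefree_def)
  obtain A where A: "size A = degree R" "R = Polynomial.smult (lead_coeff R) (\<Prod>x\<in>#A. [:-x, 1:])"
    using alg_closed_imp_factorization[OF R0] by blast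
  have lc: "lead_coeff R \<noteq> 0" using R0 by simp
  have roots: "{t. poly R t = 0} = set_mset A"
  proof -
    have "poly R t = lead_coeff R * (\<Prod>x\<in>#A. t - x)" for t
      by (subst A(2)) (simp add: poly_prod_mset)
    hence "poly R t = 0 \<longleftrightarrow> t \<in># A" for t
      using lc by (auto simp: image_iff)
    thus ?thesis by auto
  qed
  have cnt: "count A x \<le> 1" for x
  proof (rule ccontr)
    assume "\<not> count A x \<le> 1"
    hence "x \<in># A" using not_in_iff[of x A] by fastforce
    then obtain B where B: "A = add_mset x B" using multi_member_split[of x A] by blast
    have "count B x \<ge> 1" using \<open>\<not> count A x \<le> 1\<close> B by simp
    hence "x \<in># B" by (simp add: Suc_le_eq)
    then obtain C where C: "B = add_mset x C" using multi_member_split[of x B] by blast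
    have Re: "R = Polynomial.smult (lead_coeff R) ([:-x, 1:] * ([:-x, 1:] * (\<Prod>y\<in>#C. [:-y, 1:])))"
      using A(2) B C by simp
    have "[:-x, 1:] ^ 2 dvd [:-x, 1:] * ([:-x, 1:] * (\<Prod>y\<in>#C. [:-y, 1:]))"
      unfolding power2_eq_square mult.assoc[symmetric] by (rule dvd_triv_left)
    hence dv: "[:-x, 1:] ^ 2 dvd R" using Re by (metis dvd_smult)
    have "Polynomial.order x R = 0 \<or> Polynomial.order x R = 1" using rsf by (simp add: rsquarefree_def)
    hence "[:-x, 1:] ^ Suc (Polynomial.order x R) dvd R"
    proof
      assume "Polynomial.order x R = 0"
      moreover have "[:-x, 1:] ^ Suc 0 dvd [:-x, 1:] ^ 2" by (rule le_imp_power_dvd) simp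
      ultimately show ?thesis using dv dvd_trans by metis
    next
      assume "Polynomial.order x R = 1"
      thus ?thesis using dv by (simp add: numeral_2_eq_2)
    qed
    thus False using order_2[OF R0] by blast
  qed
  have "A = mset_set (set_mset A)"
  proof (rule multiset_eqI)
    fix x
    show "count A x = count (mset_set (set_mset A)) x"
    proof (cases "x \<in># A")
      case True
      hence "count A x \<noteq> 0" using not_in_iff[of x A] by blast
      hence "count A x = 1" using cnt[of x] by linarith
      thus ?thesis using True by (simp add: count_mset_set')
    next
      case False
      thus ?thesis using not_in_iff[of x A] by (simp add: count_mset_set')
    qed
  qed
  hence "size A = card (set_mset A)" by (metis size_mset_set)
  thus ?thesis using A(1) roots by simp
qed

lemma exists_rsf:
  fixes P :: "'a::{alg_closed_field, field_char_0} poly"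
  assumes "degree P > 0"
  shows "\<exists>c. rsquarefree (P - [:c:])"
proof -
  have "pderiv P \<noteq> 0" using assms by (simp add: pderiv_eq_0_iff)
  hence fin: "finite {t. poly (pderiv P) t = 0}" by (rule poly_roots_finite)
  have "finite (poly P ` {t. poly (pderiv P) t = 0})" using fin by simp
  then obtain c where c: "c \<notin> poly P ` {t. poly (pderiv P) t = 0}"
    using infinite_UNIV_char_0 by (metis UNIV_I ex_new_if_finite)
  have "rsquarefree (P - [:c:])"
    unfolding rsquarefree_roots
  proof (intro allI notI)
    fix a assume "poly (P - [:c:]) a = 0 \<and> poly (pderiv (P - [:c:])) a = 0"
    hence "poly P a = c" "poly (pderiv P) a = 0" by (simp_all add: pderiv_diff pderiv_pCons)
    thus False using c by auto
  qed
  thus ?thesis ..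
qed

lemma core:
  fixes P Q :: "'a::{alg_closed_field, field_char_0} poly" and H :: "'a \<Rightarrow> 'a poly"
  assumes on: "\<And>t. poly (H (poly P t)) (poly Q t) = 0"
      and inj: "\<And>t s. poly P t = poly P s \<Longrightarrow> poly Q t = poly Q s \<Longrightarrow> t = s"
      and degH: "\<And>c. degree (H c) \<le> d"
      and surj: "\<And>c y. poly (H c) y = 0 \<Longrightarrow> \<exists>t. poly P t = c \<and> poly Q t = y"
  shows "degree P \<le> d"
proof (cases "degree P = 0")
  case True then show ?thesis by simp
next
  case False
  then obtain c where c: "rsquarefree (P - [:c:])" using exists_rsf by blast
  have degc: "degree (P - [:c:]) = degree P" using False
    by (metis degree_add_eq_left degree_pCons_0 diff_conv_add_uminus degree_minus
        gr0I minus_pCons pCons_0_0)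
  define S where "S = {t. poly (P - [:c:]) t = 0}"
  have cardS: "card S = degree P" using card_roots_rsf[OF c] degc by (simp add: S_def)
  have S': "S = {t. poly P t = c}" by (simp add: S_def)
  have Pc0: "P - [:c:] \<noteq> 0" using c by (simp add: rsquarefree_def)
  have finS: "finite S" unfolding S_def by (rule poly_roots_finite[OF Pc0])
  have injQ: "inj_on (poly Q) S" unfolding S' by (intro inj_onI) (auto intro: inj)
  show ?thesis
  proof (cases "H c = 0")
    case False
    have "poly Q ` S \<subseteq> {y. poly (H c) y = 0}" unfolding S' using on by auto
    moreover have "finite {y. poly (H c) y = 0}" by (rule poly_roots_finite[OF False])
    ultimately have "card (poly Q ` S) \<le> card {y. poly (H c) y = 0}" by (rule card_mono[rotated])
    also have "\<dots> \<le> degree (H c)" by (rule card_poly_roots_bound[OF False])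
    finally show ?thesis using card_image[OF injQ] cardS degH[of c] by simp
  next
    case True
    have "y \<in> poly Q ` S" for y
    proof -
      have "poly (H c) y = 0" using True by simp
      then obtain t where "poly P t = c" "poly Q t = y" using surj by blast
      thus "y \<in> poly Q ` S" unfolding S' by auto
    qed
    hence "poly Q ` S = UNIV" by blast
    hence "finite (UNIV :: 'a set)" using finS by (metis finite_imageI)
    thus ?thesis using infinite_UNIV_char_0 by blast
  qed
qed



lemma generic:
  fixes P Q :: "'a::{alg_closed_field, field_char_0} poly" and f g \<alpha> \<beta> :: "'a \<Rightarrow> 'a \<Rightarrow> 'a"
  assumes P: "\<And>t. poly P t = \<alpha> (f0 + t*a) (g0 + t*b)"
      and Q: "\<And>t. poly Q t = \<beta> (f0 + t*a) (g0 + t*b)"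
      and i1: "\<And>u v. f (\<alpha> u v) (\<beta> u v) = u" and i2: "\<And>u v. g (\<alpha> u v) (\<beta> u v) = v"
      and i3: "\<And>c y. \<alpha> (f c y) (g c y) = c" and i4: "\<And>c y. \<beta> (f c y) (g c y) = y"
      and fib: "\<And>c. \<exists>H. degree H \<le> d \<and> (\<forall>y. poly H y = b*(f c y - f0) - a*(g c y - g0))"
      and ab: "a \<noteq> 0 \<or> b \<noteq> 0"
  shows "degree P \<le> d"
proof -
  obtain Hf where Hf: "\<And>c. degree (Hf c) \<le> d" "\<And>c y. poly (Hf c) y = b*(f c y - f0) - a*(g c y - g0)"
    using fib by metis
  have fP: "f (poly P t) (poly Q t) = f0 + t*a" "g (poly P t) (poly Q t) = g0 + t*b" for t
    by (simp_all add: P Q i1 i2)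
  show ?thesis
  proof (rule core[of Hf P Q])
    show "poly (Hf (poly P t)) (poly Q t) = 0" for t
      by (simp add: Hf fP algebra_simps)
    show "t = s" if "poly P t = poly P s" "poly Q t = poly Q s" for t s
    proof -
      have e1: "f0 + t*a = f0 + s*a" using fP(1)[of t] fP(1)[of s] that by metis
      have e2: "g0 + t*b = g0 + s*b" using fP(2)[of t] fP(2)[of s] that by metis
      have "(t - s) * a = 0" using e1 by (simp add: algebra_simps)
      moreover have "(t - s) * b = 0" using e2 by (simp add: algebra_simps)
      ultimately show ?thesis using ab by (cases "t = s") auto
    qed
    show "degree (Hf c) \<le> d" for c by (rule Hf)
    show "\<exists>t. poly P t = c \<and> poly Q t = y" if "poly (Hf c) y = 0" for c y
    proof -
      have eq: "b*(f c y - f0) = a*(g c y - g0)" using that Hf(2)[of c y] by simp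
      obtain t where t: "f0 + t*a = f c y" "g0 + t*b = g c y"
      proof (cases "a = 0")
        case False
        show ?thesis
        proof (rule that[of "(f c y - f0) / a"])
          show "f0 + (f c y - f0) / a * a = f c y" using False by simp
          have "(f c y - f0) / a * b = (g c y - g0)"
            using eq False by (simp add: field_simps)
          thus "g0 + (f c y - f0) / a * b = g c y" by simp
        qed
      next
        case True
        hence b: "b \<noteq> 0" using ab by simp
        show ?thesis
        proof (rule that[of "(g c y - g0) / b"])
          show "f0 + (g c y - g0) / b * a = f c y" using eq True b by simp
          show "g0 + (g c y - g0) / b * b = g c y" using b by simp
        qed
      qed
      show ?thesis using t by (intro exI[of _ t]) (simp add: P Q i3 i4)
    qed
  qed
qed

lemma total_degree_ge:
  assumes "coeff (coeff F j) i \<noteq> 0"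
  shows "i + j \<le> total_degree F"
proof -
  define K where "K = (\<Sum>j\<le>degree F. degree (coeff F j)) + degree F"
  have sub: "{i + j |i j. coeff (coeff F j) i \<noteq> 0} \<subseteq> {..K}"
  proof
    fix n assume "n \<in> {i + j |i j. coeff (coeff F j) i \<noteq> 0}"
    then obtain i j where n: "n = i + j" "coeff (coeff F j) i \<noteq> 0" by blast
    have cj: "coeff F j \<noteq> 0" using n(2) by auto
    hence j: "j \<le> degree F" by (metis le_degree)
    have "i \<le> degree (coeff F j)" using n(2) by (metis le_degree)
    also have "\<dots> \<le> (\<Sum>j\<le>degree F. degree (coeff F j))"
      by (rule member_le_sum) (use j in auto)
    finally show "n \<in> {..K}" using n j by (simp add: K_def)
  qed
  hence fin: "finite (insert 0 {i + j |i j. coeff (coeff F j) i \<noteq> 0})"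
    by (meson finite_atMost finite_insert finite_subset)
  show ?thesis unfolding total_degree_def
    by (rule Max_ge[OF fin]) (use assms in blast)
qed

lemma degree_le_total: "degree F \<le> total_degree F"
proof (cases "F = 0")
  case True then show ?thesis by simp
next
  case False
  hence "coeff (coeff F (degree F)) (degree (coeff F (degree F))) \<noteq> 0" by simp
  from total_degree_ge[OF this] show ?thesis by simp
qed

lemma degree_coeff_le_total: "degree (coeff F j) \<le> total_degree F"
proof (cases "coeff F j = 0")
  case True then show ?thesis by simp
next
  case False
  hence "coeff (coeff F j) (degree (coeff F j)) \<noteq> 0" by simp
  from total_degree_ge[OF this] show ?thesis by simp
qed

lemma degree_poly_const_le:
  fixes R :: "'a::comm_ring_1 poly poly"
  assumes "\<And>j. degree (coeff R j) \<le> m"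
  shows "degree (poly R [:c:]) \<le> m"
  using assms
proof (induction R)
  case 0 then show ?case by simp
next
  case (pCons a R)
  have a: "degree a \<le> m" using pCons.prems[of 0] by simp
  have R: "degree (poly R [:c:]) \<le> m"
    using pCons.IH pCons.prems[of "Suc _"] by simp
  have "degree ([:c:] * poly R [:c:]) \<le> m"
    using R degree_mult_le[of "[:c:]" "poly R [:c:]"] by simp
  thus ?case using a degree_add_le by (simp add: degree_add_le)
qed



definition ev :: "'k::field poly poly \<Rightarrow> 'k alg_closure \<Rightarrow> 'k alg_closure \<Rightarrow> 'k alg_closure" where
  "ev P x y = eval2 to_ac P x y"

lemma rhom_ev: "rhom (\<lambda>P. ev P x y)"
  unfolding ev_def by (rule rhom_eval2[OF rhom_to_ac])

lemma ev_comp: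
  fixes C U V :: "'k::field poly poly"
  shows "ev (eval2 (\<lambda>c. [:[:c:]:]) C U V) x y = ev C (ev U x y) (ev V x y)"
proof -
  have "(\<lambda>P. ev P x y) \<circ> (\<lambda>c. [:[:c:]:]) = to_ac"
    by (rule ext) (simp add: ev_def eval2_const[OF rhom_to_ac])
  thus ?thesis using hom_eval2_comm[OF rhom_ev rhom_cc2, of C U V x y]
    by (simp add: ev_def)
qed

lemma ev_const: "ev [:[:c:]:] x y = to_ac c"
  by (simp add: ev_def eval2_const[OF rhom_to_ac])

lemma ev_varX: "ev varX x y = x" by (simp add: ev_def eval2_varX[OF rhom_to_ac])
lemma ev_varY: "ev varY x y = y" by (simp add: ev_def eval2_varY[OF rhom_to_ac])

lemma spec_poly:
  fixes C F G :: "'k::field poly poly"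
  shows "poly (map_poly (\<lambda>c. ev c x0 y0) (eval2 (\<lambda>c. [:[:[:c:]:]:]) C [:F, varX - F:] [:G, varY - G:])) t
       = ev C (ev F x0 y0 + t * (x0 - ev F x0 y0)) (ev G x0 y0 + t * (y0 - ev G x0 y0))"
proof -
  define h where "h = (\<lambda>Q. poly (map_poly (\<lambda>c. ev c x0 y0) Q) t)"
  have h: "rhom h" unfolding h_def by (rule rhom_hpoly[OF rhom_ev])
  have e0: "ev 0 x0 y0 = 0" by (rule rhom_0[OF rhom_ev])
  have hc: "h \<circ> (\<lambda>c. [:[:[:c:]:]:]) = to_ac"
    by (rule ext) (simp add: h_def e0 map_poly_pCons ev_const)
  have hl: "h [:P, varX - P:] = ev P x0 y0 + t * (x0 - ev P x0 y0)"
           "h [:P, varY - P:] = ev P x0 y0 + t * (y0 - ev P x0 y0)" for P :: "'k poly poly"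
    by (simp_all add: h_def e0 map_poly_pCons rhom_diff[OF rhom_ev] ev_varX ev_varY)
  show ?thesis
    using hom_eval2_comm[OF h rhom_cc3, of C "[:F, varX - F:]" "[:G, varY - G:]"]
    unfolding hc hl by (simp add: h_def ev_def)
qed

lemma exists_nonzero_point:
  fixes c :: "'k::field_char_0 poly poly"
  assumes "c \<noteq> 0"
  shows "\<exists>x y. ev c x y \<noteq> 0"
proof -
  have lc: "lead_coeff c \<noteq> 0" using assms by simp
  have "map_poly to_ac (lead_coeff c) \<noteq> 0"
    using lc by (subst map_poly_eq_0_iff) auto
  then obtain x where x: "poly (map_poly to_ac (lead_coeff c)) x \<noteq> 0"
    using poly_all_0_iff_0 by blast
  define g where "g = (\<lambda>p. poly (map_poly to_ac p) x)"
  have g0: "g 0 = 0" by (simp add: g_def)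
  have "lead_coeff (map_poly g c) = g (lead_coeff c)"
    by (rule lead_coeff_map_poly_nz) (use x g0 in \<open>simp_all add: g_def\<close>)
  hence "map_poly g c \<noteq> 0" using x by (auto simp: g_def)
  then obtain y where "poly (map_poly g c) y \<noteq> 0"
    using poly_all_0_iff_0 by blast
  hence "ev c x y \<noteq> 0" by (simp add: ev_def eval2_def g_def)
  thus ?thesis by blast
qed

lemma map_to_ac_alt: "map_poly to_ac p = poly (map_poly (\<lambda>c. [:to_ac c:]) p) [:0, 1:]"
proof (induction p)
  case 0 then show ?case by simp
next
  case (pCons a p)
  then show ?case by (simp add: map_poly_pCons)
qed

lemma rhom_map_to_ac: "rhom (map_poly to_ac :: 'k::field poly \<Rightarrow> 'k alg_closure poly)"
proof -
  have r: "rhom (\<lambda>c::'k. [:to_ac c:])"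
    using rhom_comp[OF rhom_const rhom_to_ac] by (simp add: comp_def)
  have "rhom (\<lambda>p::'k poly. poly (map_poly (\<lambda>c. [:to_ac c:]) p) [:0, 1:])"
    by (rule rhom_hpoly[OF r])
  thus ?thesis by (simp add: map_to_ac_alt[symmetric])
qed

lemma fiber_x:
  fixes F :: "'k::field_char_0 poly poly"
  shows "\<exists>H. degree H \<le> total_degree F \<and> (\<forall>y. poly H y = ev F c y)"
proof (intro exI conjI allI)
  show "degree (map_poly (\<lambda>p. poly (map_poly to_ac p) c) F) \<le> total_degree F"
    using map_poly_degree_leq degree_le_total order_trans by blast
  show "poly (map_poly (\<lambda>p. poly (map_poly to_ac p) c) F) y = ev F c y" for y
    by (simp add: ev_def eval2_def)
qed

lemma fiber_y:
  fixes F :: "'k::field_char_0 poly poly"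
  shows "\<exists>H. degree H \<le> total_degree F \<and> (\<forall>y. poly H y = ev F y c)"
proof (intro exI conjI allI)
  define H where "H = poly (map_poly (map_poly to_ac) F) [:c:]"
  show "degree H \<le> total_degree F"
    unfolding H_def
  proof (rule degree_poly_const_le)
    fix j
    have "degree (coeff (map_poly (map_poly to_ac) F) j) = degree (map_poly to_ac (coeff F j))"
      by (simp add: coeff_map_poly)
    also have "\<dots> \<le> degree (coeff F j)" by (rule map_poly_degree_leq)
    also have "\<dots> \<le> total_degree F" by (rule degree_coeff_le_total)
    finally show "degree (coeff (map_poly (map_poly to_ac) F) j) \<le> total_degree F" .
  qed
  show "poly H y = ev F y c" for y
  proof -
    have hy: "rhom (\<lambda>r::'k alg_closure poly. poly r y)" by (rule rhom_polyat)
    have "poly H y = poly (map_poly ((\<lambda>r. poly r y) \<circ> map_poly to_ac) F) c"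
      unfolding H_def using hom_hpoly_comm[OF hy rhom_map_to_ac, of F "[:c:]"] by simp
    also have "(\<lambda>r. poly r y) \<circ> map_poly to_ac = (\<lambda>p. poly (map_poly to_ac p) y)"
      by (simp add: comp_def)
    finally show ?thesis by (simp add: ev_def eval2_def)
  qed
qed



lemma deg_bound:
  fixes F G A B :: "'k::field_char_0 poly poly"
  assumes "eval2 (\<lambda>c. [:[:c:]:]) A F G = varX"
      and "eval2 (\<lambda>c. [:[:c:]:]) B F G = varY"
      and "eval2 (\<lambda>c. [:[:c:]:]) F A B = varX"
      and "eval2 (\<lambda>c. [:[:c:]:]) G A B = varY"
  defines "PX \<equiv> eval2 (\<lambda>c. [:[:[:c:]:]:]) A [:F, varX - F:] [:G, varY - G:]"
      and "PY \<equiv> eval2 (\<lambda>c. [:[:[:c:]:]:]) B [:F, varX - F:] [:G, varY - G:]"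
  shows "degree PX \<le> max (total_degree F) (total_degree G)
       \<and> degree PY \<le> max (total_degree F) (total_degree G)"
proof -
  define d where "d = max (total_degree F) (total_degree G)"
  have i1: "ev A (ev F x y) (ev G x y) = x" for x y
    using ev_comp[of A F G x y] assms(1) by (simp add: ev_varX)
  have i2: "ev B (ev F x y) (ev G x y) = y" for x y
    using ev_comp[of B F G x y] assms(2) by (simp add: ev_varY)
  have i3: "ev F (ev A x y) (ev B x y) = x" for x y
    using ev_comp[of F A B x y] assms(3) by (simp add: ev_varX)
  have i4: "ev G (ev A x y) (ev B x y) = y" for x y
    using ev_comp[of G A B x y] assms(4) by (simp add: ev_varY)
  have fib: "\<exists>H. degree H \<le> d \<and> (\<forall>y. poly H y = b*(ev F c y - f0) - a*(ev G c y - g0))"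
    for a b c f0 g0
  proof -
    obtain H1 where H1: "degree H1 \<le> total_degree F" "\<And>y. poly H1 y = ev F c y"
      using fiber_x[of F c] by blast
    obtain H2 where H2: "degree H2 \<le> total_degree G" "\<And>y. poly H2 y = ev G c y"
      using fiber_x[of G c] by blast
    define H where "H = Polynomial.smult b (H1 - [:f0:]) - Polynomial.smult a (H2 - [:g0:])"
    have "degree H \<le> d"
    proof -
      have "degree (H1 - [:f0:]) \<le> d" using H1(1) degree_diff_le[of H1 d "[:f0:]"]
        by (simp add: d_def)
      moreover have "degree (H2 - [:g0:]) \<le> d" using H2(1) degree_diff_le[of H2 d "[:g0:]"]
        by (simp add: d_def)
      ultimately show ?thesis unfolding H_def
        by (meson degree_diff_le degree_smult_le order_trans)
    qed
    moreover have "poly H y = b*(ev F c y - f0) - a*(ev G c y - g0)" for y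
      by (simp add: H_def H1 H2)
    ultimately show ?thesis by blast
  qed
  have fib2: "\<exists>H. degree H \<le> d \<and> (\<forall>y. poly H y = b*(ev F y c - f0) - a*(ev G y c - g0))"
    for a b c f0 g0
  proof -
    obtain H1 where H1: "degree H1 \<le> total_degree F" "\<And>y. poly H1 y = ev F y c"
      using fiber_y[of F c] by blast
    obtain H2 where H2: "degree H2 \<le> total_degree G" "\<And>y. poly H2 y = ev G y c"
      using fiber_y[of G c] by blast
    define H where "H = Polynomial.smult b (H1 - [:f0:]) - Polynomial.smult a (H2 - [:g0:])"
    have "degree H \<le> d"
    proof -
      have "degree (H1 - [:f0:]) \<le> d" using H1(1) degree_diff_le[of H1 d "[:f0:]"]
        by (simp add: d_def)
      moreover have "degree (H2 - [:g0:]) \<le> d" using H2(1) degree_diff_le[of H2 d "[:g0:]"]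
        by (simp add: d_def)
      ultimately show ?thesis unfolding H_def
        by (meson degree_diff_le degree_smult_le order_trans)
    qed
    moreover have "poly H y = b*(ev F y c - f0) - a*(ev G y c - g0)" for y
      by (simp add: H_def H1 H2)
    ultimately show ?thesis by blast
  qed
  have main: "degree Z \<le> d" if Z: "Z = PX \<or> Z = PY" for Z
  proof (cases "Z = 0")
    case True then show ?thesis by simp
  next
    case False
    then obtain x0 y0 where xy: "ev (lead_coeff Z) x0 y0 \<noteq> 0"
      using exists_nonzero_point[of "lead_coeff Z"] by auto
    define P where "P = map_poly (\<lambda>c. ev c x0 y0) PX"
    define Q where "Q = map_poly (\<lambda>c. ev c x0 y0) PY"
    define f0 where "f0 = ev F x0 y0"
    define g0 where "g0 = ev G x0 y0"
    define a where "a = x0 - f0"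
    define b where "b = y0 - g0"
    have Pt: "poly P t = ev A (f0 + t*a) (g0 + t*b)" for t
      unfolding P_def PX_def spec_poly f0_def g0_def a_def b_def ..
    have Qt: "poly Q t = ev B (f0 + t*a) (g0 + t*b)" for t
      unfolding Q_def PY_def spec_poly f0_def g0_def a_def b_def ..
    have degZ: "degree (map_poly (\<lambda>c. ev c x0 y0) Z) = degree Z"
      by (rule map_poly_degree_eq) (use xy in simp)
    show ?thesis
    proof (cases "a = 0 \<and> b = 0")
      case True
      have "poly (map_poly (\<lambda>c. ev c x0 y0) Z) = poly [:(if Z = PX then ev A f0 g0 else ev B f0 g0):]"
        using Z Pt Qt True unfolding P_def Q_def by (auto simp: fun_eq_iff)
      hence "map_poly (\<lambda>c. ev c x0 y0) Z = [:(if Z = PX then ev A f0 g0 else ev B f0 g0):]"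
        by (simp add: poly_eq_poly_eq_iff)
      thus ?thesis using degZ by simp
    next
      case False
      hence ab: "a \<noteq> 0 \<or> b \<noteq> 0" by blast
      have dP: "degree P \<le> d"
        by (rule generic[of P "\<lambda>u v. ev A u v" f0 a g0 b Q "\<lambda>u v. ev B u v"
              "\<lambda>u v. ev F u v" "\<lambda>u v. ev G u v"])
           (use Pt Qt i1 i2 i3 i4 fib ab in simp_all)
      have dQ: "degree Q \<le> d"
        by (rule generic[of Q "\<lambda>u v. ev B u v" f0 a g0 b P "\<lambda>u v. ev A u v"
              "\<lambda>u v. ev F v u" "\<lambda>u v. ev G v u"])
           (use Pt Qt i1 i2 i3 i4 fib2 ab in simp_all)
      show ?thesis using Z dP dQ degZ unfolding P_def Q_def by auto
    qed
  qed
  show ?thesis using main[of PX] main[of PY] by (simp add: d_def)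
qed


theorem lemma3p1:
  fixes F G A B :: "'k::field_char_0 poly poly"
  assumes "eval2 (\<lambda>c. [:[:c:]:]) A F G = varX"
      and "eval2 (\<lambda>c. [:[:c:]:]) B F G = varY"
      and "eval2 (\<lambda>c. [:[:c:]:]) F A B = varX"
      and "eval2 (\<lambda>c. [:[:c:]:]) G A B = varY"
  shows "\<exists>\<X> \<Y> :: 'k poly poly poly.
           eval2 (\<lambda>c. [:[:[:c:]:]:]) F \<X> \<Y> = [:0, 1:] * [:varX:] + (1 - [:0, 1:]) * [:F:]
         \<and> eval2 (\<lambda>c. [:[:[:c:]:]:]) G \<X> \<Y> = [:0, 1:] * [:varY:] + (1 - [:0, 1:]) * [:G:]
         \<and> poly \<X> 0 = varX \<and> poly \<Y> 0 = varY
         \<and> poly \<X> 1 = A \<and> poly \<Y> 1 = B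
         \<and> degree \<X> \<le> max (total_degree F) (total_degree G)
         \<and> degree \<Y> \<le> max (total_degree F) (total_degree G)"
  using construction[OF assms] deg_bound[OF assms] by blast

end
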